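(* Let $r,k\in\mathbb Z$ with $0\le k\le r$, and suppose Assumption (A1) holds. Then there is a constant $\kappa_{r,k}>0$, independent of $\tau_n$ and $n$, such that for all $\varphi\in P_r(I_n,\mathbb R^d)$ $$\int_{I_n}\|\varphi'(t)\|\,dt\le\tau_n\sup_{t\in I_n}\|\varphi'(t)\|\le\kappa_{r,k}\Big(\sum_{i=1}^{\lfloor (k-1)/2\rfloor}\big(\tfrac{\tau_n}{2}\big)^i\|\varphi^{(i)}(t_{n-1}^+)\|+\sum_{i=1}^{\lfloor k/2\rfloor}\big(\tfrac{\tau_n}{2}\big)^i\|\varphi^{(i)}(t_n^-)\|+\sum_{i=\delta_{0,k}}^{r-k}\Big\|\mathscr I_n\big[\varphi'(t)(1+T_n^{-1}(t))^i\big]\Big\|\Big)$$ and $$\sup_{t\in I_n}\|\varphi(t)\|\le\min\{\|\varphi(t_{n-1}^+)\|,\|\varphi(t_n^-)\|\}+\int_{I_n}\|\varphi'(t)\|\,dt.$$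
   Context: Mesh: $t_0<t_1<\dots<t_N$, $I_n=(t_{n-1},t_n]$, $\tau_n=t_n-t_{n-1}\le1$; $v(t_n^\pm)$ denote one-sided limits. $T_n(\hat t)=\frac{t_n+t_{n-1}}{2}+\frac{\tau_n}{2}\hat t$ maps $(-1,1]$ onto $I_n$. $\|\cdot\|$ is the Euclidean norm on $\mathbb R^d$; $P_s$ denotes polynomials of degree at most $s$; $\delta_{i,j}$ is the Kronecker symbol; empty sums are zero. $\widehat{\mathscr I}$ is a linear functional (reference integrator) on $C^{k_{\mathscr I}}([-1,1])$ and its local version is $\mathscr I_n[\varphi]=\frac{\tau_n}{2}\widehat{\mathscr I}[\varphi\circ T_n]$, acting componentwise on vector-valued functions. Assumption (A1): whenever $\hat\psi\in P_{r-\max\{1,k\}}([-1,1])$ satisfies $\widehat{\mathscr I}\big[(1-\hat t)^{\lfloor k/2\rfloor}(1+\hat t)^{|\lfloor (k-1)/2\rfloor|}\hat\psi\,\hat\varphi\big]=0$ for all $\hat\varphi\in P_{r-\max\{1,k\}}([-1,1])$, then $\hat\psi\equiv0$. *)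

theory Defs
  imports "HOL-Analysis.Analysis"
begin

text \<open>Real polynomial functions of degree at most m (m an integer; for m < 0 only the zero function).\<close>
definition poly_fun_le :: "int \<Rightarrow> (real \<Rightarrow> real) \<Rightarrow> bool" where
  "poly_fun_le m f \<longleftrightarrow> (\<exists>c::nat \<Rightarrow> real. \<forall>t. f t = (\<Sum>i<nat (m + 1). c i * t ^ i))"

definition is_poly_fun :: "(real \<Rightarrow> real) \<Rightarrow> bool" where
  "is_poly_fun f \<longleftrightarrow> (\<exists>m. poly_fun_le m f)"

definition vpoly_fun_le :: "int \<Rightarrow> (real \<Rightarrow> 'a::real_vector) \<Rightarrow> bool" where
  "vpoly_fun_le m f \<longleftrightarrow> (\<exists>c::nat \<Rightarrow> 'a. \<forall>t. f t = (\<Sum>i<nat (m + 1). t ^ i *\<^sub>R c i))"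

definition vdiff :: "(real \<Rightarrow> 'a::real_normed_vector) \<Rightarrow> real \<Rightarrow> 'a" where
  "vdiff g = (\<lambda>x. vector_derivative g (at x))"

definition vdiffn :: "nat \<Rightarrow> (real \<Rightarrow> 'a::real_normed_vector) \<Rightarrow> real \<Rightarrow> 'a" where
  "vdiffn i g = (vdiff ^^ i) g"

definition Tmap :: "real \<Rightarrow> real \<Rightarrow> real \<Rightarrow> real" where
  "Tmap a b s = (a + b) / 2 + (b - a) / 2 * s"

definition Tinv :: "real \<Rightarrow> real \<Rightarrow> real \<Rightarrow> real" where
  "Tinv a b t = (2 * t - a - b) / (b - a)"

definition loc_int :: "((real \<Rightarrow> real) \<Rightarrow> real) \<Rightarrow> real \<Rightarrow> real \<Rightarrow> (real \<Rightarrow> 'a::euclidean_space) \<Rightarrow> 'a" where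
  "loc_int I a b \<psi> = (\<Sum>j\<in>Basis. ((b - a) / 2 * I (\<lambda>s. \<psi> (Tmap a b s) \<bullet> j)) *\<^sub>R j)"

definition A1 :: "((real \<Rightarrow> real) \<Rightarrow> real) \<Rightarrow> int \<Rightarrow> int \<Rightarrow> bool" where
  "A1 I r k \<longleftrightarrow> (\<forall>\<psi>. poly_fun_le (r - max 1 k) \<psi> \<longrightarrow>
      (\<forall>\<phi>. poly_fun_le (r - max 1 k) \<phi> \<longrightarrow>
         I (\<lambda>t. (1 - t) ^ nat (k div 2) * (1 + t) ^ nat \<bar>(k - 1) div 2\<bar> * \<psi> t * \<phi> t) = 0)
      \<longrightarrow> (\<forall>t\<in>{-1..1}. \<psi> t = 0))"

end

theory Submission
  imports Defs "HOL-Computational_Algebra.Polynomial" "HOL-Library.Function_Algebras"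
begin

lemma vs_poly: "Vector_Spaces.vector_space (smult :: real \<Rightarrow> real poly \<Rightarrow> real poly)"
  by unfold_locales (auto simp: smult_add_right smult_add_left)

lemma vs_fun: "Vector_Spaces.vector_space (\<lambda>(a::real) (f::'j \<Rightarrow> real). (\<lambda>x. a * f x))"
  by unfold_locales (auto simp: algebra_simps plus_fun_def)

lemma poly_bound_unit:
  fixes p :: "real poly"
  assumes "\<bar>s\<bar> \<le> 1"
  shows "\<bar>poly p s\<bar> \<le> (\<Sum>i\<le>degree p. \<bar>coeff p i\<bar>)"
proof -
  have "\<bar>poly p s\<bar> \<le> (\<Sum>i\<le>degree p. \<bar>coeff p i * s ^ i\<bar>)"
    unfolding poly_altdef by (rule sum_abs)
  also have "\<dots> \<le> (\<Sum>i\<le>degree p. \<bar>coeff p i\<bar>)"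
    by (rule sum_mono) (auto simp: abs_mult power_abs intro!: mult_left_le power_le_one assms)
  finally show ?thesis .
qed

lemma left_inv_bound:
  fixes F :: "real poly \<Rightarrow> 'j \<Rightarrow> real" and J :: "'j set" and n :: nat
  assumes J: "finite J"
    and Fadd: "\<And>p q x. F (p + q) x = F p x + F q x"
    and Fsc: "\<And>c p x. F (smult c p) x = c * F p x"
    and inj: "\<And>p. (\<forall>i\<ge>n. coeff p i = 0) \<Longrightarrow> (\<forall>x\<in>J. F p x = 0) \<Longrightarrow> p = 0"
  shows "\<exists>K>0. \<forall>p. (\<forall>i\<ge>n. coeff p i = 0) \<longrightarrow> (\<forall>s\<in>{-1..1}. \<bar>poly p s\<bar> \<le> K * (\<Sum>x\<in>J. \<bar>F p x\<bar>))"
proof -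
  define G where "G p = (\<lambda>x. if x \<in> J then F p x else 0)" for p
  define V where "V = {p::real poly. \<forall>i\<ge>n. coeff p i = 0}"
  interpret vp: vector_space_pair "smult :: real \<Rightarrow> real poly \<Rightarrow> real poly" "(\<lambda>(a::real) (f::'j \<Rightarrow> real). (\<lambda>x. a * f x))"
    using vs_poly vs_fun by (simp add: vector_space_pair_def)
  have lin: "Vector_Spaces.linear smult (\<lambda>(a::real) (f::'j \<Rightarrow> real). (\<lambda>x. a * f x)) G"
    apply unfold_locales
    apply (auto simp: G_def Fadd Fsc plus_fun_def fun_eq_iff smult_add_right smult_add_left algebra_simps)
    done
  have sub: "vp.vs1.subspace V"
    unfolding vp.vs1.subspace_def V_def by auto
  have injV: "inj_on G V"
  proof (rule vp.linear_inj_on_iff_eq_0[THEN iffD2, OF lin sub] )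
    show "\<forall>v\<in>V. G v = 0 \<longrightarrow> v = 0"
      using inj by (auto simp: V_def G_def fun_eq_iff)
  qed
  obtain g where g: "Vector_Spaces.linear (\<lambda>(a::real) (f::'j \<Rightarrow> real). (\<lambda>x. a * f x)) smult g"
     "\<forall>v\<in>V. g (G v) = v"
    using vp.linear_exists_left_inverse_on[OF lin sub injV] by blast
  define e where "e x = (\<lambda>y. if y = x then 1 else (0::real))" for x :: 'j
  define B where "B x = (\<Sum>i\<le>degree (g (e x)). \<bar>coeff (g (e x)) i\<bar>)" for x
  define K where "K = 1 + (\<Sum>x\<in>J. B x)"
  have B0: "B x \<ge> 0" for x unfolding B_def by (auto intro: sum_nonneg)
  have K: "K > 0" unfolding K_def using B0 by (smt (verit) sum_nonneg)
  show ?thesis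
  proof (intro exI[of _ K] conjI allI impI ballI K)
    fix p :: "real poly" and s :: real assume pV: "\<forall>i\<ge>n. coeff p i = 0" and s: "s \<in> {-1..1::real}"
    have sapp: "(\<Sum>x\<in>A. f x) y = (\<Sum>x\<in>A. f x y)" for A and f :: "'j \<Rightarrow> 'j \<Rightarrow> real" and y
      by (induction A rule: infinite_finite_induct) auto
    have Gp: "G p = (\<Sum>x\<in>J. (\<lambda>y. F p x * e x y))"
      unfolding fun_eq_iff sapp using J by (auto simp: G_def e_def if_distrib sum.delta cong: if_cong)
    interpret gl: Vector_Spaces.linear "(\<lambda>(a::real) (f::'j \<Rightarrow> real). (\<lambda>x. a * f x))" smult g by (rule g(1))
    have "p = g (G p)" using g(2) pV by (auto simp: V_def)
    also have "\<dots> = (\<Sum>x\<in>J. smult (F p x) (g (e x)))"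
      unfolding Gp gl.sum by (auto simp: gl.scale[symmetric])
    finally have pe: "p = (\<Sum>x\<in>J. smult (F p x) (g (e x)))" .
    have "poly p s = (\<Sum>x\<in>J. F p x * poly (g (e x)) s)"
      using arg_cong[of _ _ "\<lambda>q. poly q s", OF pe] unfolding poly_sum poly_smult .
    hence "\<bar>poly p s\<bar> \<le> (\<Sum>x\<in>J. \<bar>F p x\<bar> * B x)"
      using s by (auto intro!: order.trans[OF sum_abs] sum_mono mult_left_mono poly_bound_unit simp: abs_mult B_def)
    also have "\<dots> \<le> (\<Sum>x\<in>J. \<bar>F p x\<bar> * K)"
      apply (rule sum_mono, rule mult_left_mono[rotated], simp)
      unfolding K_def using member_le_sum[OF _ _ J, of _ B] B0 by (smt (verit))
    also have "\<dots> = K * (\<Sum>x\<in>J. \<bar>F p x\<bar>)" by (simp add: sum_distrib_left mult.commute)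
    finally show "\<bar>poly p s\<bar> \<le> K * (\<Sum>x\<in>J. \<bar>F p x\<bar>)" .
  qed
qed

lemma poly_sum_upto:
  fixes P :: "real poly"
  assumes "degree P \<le> n"
  shows "poly P x = (\<Sum>i\<le>n. coeff P i * x ^ i)"
  unfolding poly_altdef using assms
  by (intro sum.mono_neutral_left) (auto simp: coeff_eq_0)

lemma is_poly_fun_poly: "is_poly_fun (poly (P :: real poly))"
  unfolding is_poly_fun_def poly_fun_le_def
proof (rule exI[of _ "int (degree P)"], rule exI[of _ "coeff P"], intro allI)
  fix t :: real
  have "nat (int (degree P) + 1) = Suc (degree P)" by simp
  then show "poly P t = (\<Sum>i<nat (int (degree P) + 1). coeff P i * t ^ i)"
    by (simp only: poly_altdef lessThan_Suc_atMost)
qed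

lemma poly_fun_le_poly: "degree (P :: real poly) \<le> nat m \<Longrightarrow> 0 \<le> m \<Longrightarrow> poly_fun_le m (poly P)"
  unfolding poly_fun_le_def
  apply (rule exI[of _ "coeff P"])
  apply (simp add: poly_sum_upto[of P "nat m"] lessThan_Suc_atMost[symmetric] nat_add_distrib del: lessThan_Suc_atMost)
  done

lemma poly_fun_le_ex: "poly_fun_le m f \<Longrightarrow> \<exists>P::real poly. f = poly P \<and> degree P \<le> nat m"
proof -
  assume "poly_fun_le m f"
  then obtain c where c: "\<And>t. f t = (\<Sum>i<nat (m + 1). c i * t ^ i)" unfolding poly_fun_le_def by blast
  define P where "P = (\<Sum>i<nat (m + 1). monom (c i) i)"
  have "f = poly P" unfolding P_def fun_eq_iff c by (simp add: poly_sum poly_monom)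
  moreover have "degree P \<le> nat m" unfolding P_def
    by (rule degree_sum_le) (auto intro: order.trans[OF degree_monom_le])
  ultimately show ?thesis by blast
qed

lemma pderiv_funpow_add: "(pderiv ^^ m) (p + q) = (pderiv ^^ m) p + (pderiv ^^ m) q"
  by (induction m) (auto simp: pderiv_add)

lemma pderiv_funpow_smult: "(pderiv ^^ m) (smult c p) = smult c ((pderiv ^^ m) p)"
  by (induction m) (auto simp: pderiv_smult)

lemma vanish_order:
  fixes q :: "real poly"
  assumes "\<forall>i<m. poly ((pderiv ^^ i) q) x = 0"
  shows "q = 0 \<or> m \<le> order x q"
  using assms
proof (induction m arbitrary: q)
  case 0 then show ?case by simp
next
  case (Suc m)
  have q0: "poly q x = 0" using Suc.prems by (metis funpow_0 zero_less_Suc)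
  have "\<forall>i<m. poly ((pderiv ^^ i) (pderiv q)) x = 0"
    using Suc.prems by (metis Suc_mono funpow_Suc_right o_apply)
  from Suc.IH[OF this] have h: "pderiv q = 0 \<or> m \<le> order x (pderiv q)" .
  show ?case
  proof (cases "q = 0")
    case True then show ?thesis by simp
  next
    case False
    show ?thesis
    proof (cases "pderiv q = 0")
      case True
      then obtain h where "q = [:h:]" using pderiv_iszero by blast
      then show ?thesis using q0 False by simp
    next
      case False
      then show ?thesis using h order_pderiv[OF \<open>q \<noteq> 0\<close> q0] by simp
    qed
  qed
qed

lemma span_lemma:
  fixes Ip :: "real poly \<Rightarrow> real" and q :: "real poly"
  assumes add: "\<And>p q. Ip (p + q) = Ip p + Ip q"
    and sc: "\<And>c p. Ip (smult c p) = c * Ip p"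
    and van: "\<forall>i\<le>n. Ip ([:1,1:] ^ (e + i) * q) = 0"
    and deg: "degree P \<le> n"
  shows "Ip ([:1,1:] ^ e * P * q) = 0"
proof -
  define P' where "P' = pcompose P [:-1,1:]"
  have dP': "degree P' \<le> n" unfolding P'_def using deg degree_pcompose_le[of P "[:-1,1:]"] by simp
  have Pe: "P = (\<Sum>i\<le>n. smult (coeff P' i) ([:1,1:] ^ i))"
  proof (rule poly_ext)
    fix t :: real
    have "poly P t = poly P' (t + 1)" unfolding P'_def by (simp add: poly_pcompose)
    also have "\<dots> = (\<Sum>i\<le>n. coeff P' i * (t + 1) ^ i)" by (rule poly_sum_upto[OF dP'])
    finally show "poly P t = poly (\<Sum>i\<le>n. smult (coeff P' i) ([:1,1:] ^ i)) t"
      by (simp add: poly_sum poly_power add.commute)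
  qed
  have I0: "Ip 0 = 0" using sc[of 0 0] by simp
  have Isum: "Ip (sum f A) = (\<Sum>i\<in>A. Ip (f i))" for f :: "nat \<Rightarrow> real poly" and A
    by (induction A rule: infinite_finite_induct) (auto simp: I0 add)
  have "[:1,1:] ^ e * P * q = (\<Sum>i\<le>n. smult (coeff P' i) ([:1,1:] ^ (e + i) * q))"
    by (subst Pe) (simp add: sum_distrib_left sum_distrib_right power_add mult_ac)
  then show ?thesis using van by (simp add: Isum sc)
qed

lemma poly_zero_on_Icc:
  fixes p :: "real poly"
  assumes "\<forall>t\<in>{-1..1}. poly p t = 0"
  shows "p = 0"
proof (rule ccontr)
  assume "p \<noteq> 0"
  from poly_roots_finite[OF this] have "finite {x. poly p x = 0}" .
  moreover have "{-1..1::real} \<subseteq> {x. poly p x = 0}" using assms by auto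
  ultimately have "finite {-1..1::real}" by (rule finite_subset[rotated])
  then show False by (simp add: infinite_Icc)
qed

lemma core:
  fixes I :: "(real \<Rightarrow> real) \<Rightarrow> real" and r k :: int
  assumes k0: "0 \<le> k" and kr: "k \<le> r"
    and I_add: "\<And>f g. is_poly_fun f \<Longrightarrow> is_poly_fun g \<Longrightarrow> I (\<lambda>t. f t + g t) = I f + I g"
    and I_scale: "\<And>f c. is_poly_fun f \<Longrightarrow> I (\<lambda>t. c * f t) = c * I f"
    and A: "A1 I r k"
  shows "\<exists>C>0. \<forall>q::real poly. (\<forall>i\<ge>nat r. coeff q i = 0) \<longrightarrow> (\<forall>s\<in>{-1..1}. \<bar>poly q s\<bar> \<le> C *
     ((\<Sum>i\<in>{1..(k - 1) div 2}. \<bar>poly ((pderiv ^^ (nat i - 1)) q) (-1)\<bar>)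
    + (\<Sum>i\<in>{1..k div 2}. \<bar>poly ((pderiv ^^ (nat i - 1)) q) 1\<bar>)
    + (\<Sum>i\<in>{(if k = 0 then 1 else 0)..r - k}. \<bar>I (\<lambda>s. (1 + s) ^ nat i * poly q s)\<bar>)))"
proof -
  define Ip where "Ip P = I (poly P)" for P :: "real poly"
  have Ipadd: "Ip (p + q) = Ip p + Ip q" for p q
  proof -
    have "poly (p + q) = (\<lambda>t. poly p t + poly q t)" by (simp add: fun_eq_iff)
    then show ?thesis unfolding Ip_def using I_add[OF is_poly_fun_poly[of p] is_poly_fun_poly[of q]] by simp
  qed
  have Ipsc: "Ip (smult c p) = c * Ip p" for c p
  proof -
    have "poly (smult c p) = (\<lambda>t. c * poly p t)" by (simp add: fun_eq_iff)
    then show ?thesis unfolding Ip_def using I_scale[OF is_poly_fun_poly[of p], of c] by simp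
  qed
  have Iform: "I (\<lambda>s. (1 + s) ^ n * poly q s) = Ip ([:1,1:] ^ n * q)" for n q
    unfolding Ip_def by (rule arg_cong[where f=I]) (simp add: fun_eq_iff poly_power)
  define J1 where "J1 = {1..(k - 1) div 2}"
  define J2 where "J2 = {1..k div 2}"
  define J3 where "J3 = {(if k = 0 then 1 else 0)..r - k}"
  define J :: "(nat \<times> int) set" where "J = Pair 0 ` J1 \<union> Pair 1 ` J2 \<union> Pair 2 ` J3"
  define F where "F q x = (if fst x = 0 then poly ((pderiv ^^ (nat (snd x) - 1)) q) (-1)
      else if fst x = 1 then poly ((pderiv ^^ (nat (snd x) - 1)) q) 1
      else Ip ([:1,1:] ^ nat (snd x) * q))" for q :: "real poly" and x :: "nat \<times> int"
  have finJ: "finite J" unfolding J_def J1_def J2_def J3_def by auto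
  have Fadd: "F (p + q) x = F p x + F q x" for p q x
    unfolding F_def by (simp add: pderiv_funpow_add Ipadd distrib_left)
  have Fsc: "F (smult c p) x = c * F p x" for c p x
    unfolding F_def by (simp add: pderiv_funpow_smult Ipsc)
  have inj: "q = 0" if qc: "\<forall>i\<ge>nat r. coeff q i = 0" and qF: "\<forall>x\<in>J. F q x = 0" for q
  proof (rule ccontr)
    assume qn: "q \<noteq> 0"
    have dq: "degree q < nat r"
      using qc qn by (metis leading_coeff_0_iff not_le)
    have van3: "Ip ([:1,1:] ^ nat i * q) = 0" if "i \<in> J3" for i
      using qF that unfolding J_def F_def by force
    show False
    proof (cases "k = 0")
      case True
      have r1: "1 \<le> r" using dq by linarith
      have pf: "poly_fun_le (r - max 1 k) (poly q)"
        using True r1 dq by (intro poly_fun_le_poly) auto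
      have "\<forall>\<phi>. poly_fun_le (r - max 1 k) \<phi> \<longrightarrow> I (\<lambda>t. (1 - t) ^ nat (k div 2) * (1 + t) ^ nat \<bar>(k - 1) div 2\<bar> * poly q t * \<phi> t) = 0"
      proof (intro allI impI)
        fix \<phi> assume "poly_fun_le (r - max 1 k) \<phi>"
        then obtain P where P: "\<phi> = poly P" "degree P \<le> nat (r - max 1 k)" using poly_fun_le_ex by blast
        have "I (\<lambda>t. (1 - t) ^ nat (k div 2) * (1 + t) ^ nat \<bar>(k - 1) div 2\<bar> * poly q t * \<phi> t) = Ip ([:1,1:] ^ 1 * P * q)"
          unfolding Ip_def P(1) True by (rule arg_cong[where f=I]) (simp add: fun_eq_iff algebra_simps)
        also have "\<dots> = 0"
        proof (rule span_lemma[OF Ipadd Ipsc _ P(2)], intro allI impI)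
          fix i assume "i \<le> nat (r - max 1 k)"
          then have "int (1 + i) \<in> J3" using True r1 unfolding J3_def by (auto simp: le_nat_iff)
          from van3[OF this] show "Ip ([:1, 1:] ^ (1 + i) * q) = 0" by (simp only: nat_int)
        qed
        finally show "I (\<lambda>t. (1 - t) ^ nat (k div 2) * (1 + t) ^ nat \<bar>(k - 1) div 2\<bar> * poly q t * \<phi> t) = 0" .
      qed
      with A pf have "\<forall>t\<in>{-1..1}. poly q t = 0" unfolding A1_def by blast
      with poly_zero_on_Icc qn show False by blast
    next
      case False
      define m1 where "m1 = nat ((k - 1) div 2)"
      define m2 where "m2 = nat (k div 2)"
      have m12: "int m1 + int m2 = k - 1" unfolding m1_def m2_def using False k0 by simp
      have v1: "\<forall>i<m1. poly ((pderiv ^^ i) q) (-1) = 0"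
      proof (intro allI impI)
        fix i assume "i < m1"
        then have "(0, int (Suc i)) \<in> J" unfolding J_def J1_def m1_def by auto
        with qF have "F q (0, int (Suc i)) = 0" by blast
        then show "poly ((pderiv ^^ i) q) (-1) = 0" unfolding F_def by (simp only: nat_int fst_conv snd_conv diff_Suc_1) simp
      qed
      have v2: "\<forall>i<m2. poly ((pderiv ^^ i) q) 1 = 0"
      proof (intro allI impI)
        fix i assume "i < m2"
        then have "(1, int (Suc i)) \<in> J" unfolding J_def J2_def m2_def by auto
        with qF have "F q (1, int (Suc i)) = 0" by blast
        then show "poly ((pderiv ^^ i) q) 1 = 0" unfolding F_def by (simp only: nat_int fst_conv snd_conv diff_Suc_1) simp
      qed
      have "[:- (-1), 1:] ^ m1 dvd q" using vanish_order[OF v1] qn order_divides by blast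
      then obtain q1 where q1: "q = [:1,1:] ^ m1 * q1" by (auto elim: dvdE)
      have q1n: "q1 \<noteq> 0" using qn q1 by auto
      have "poly ([:1,1::real:] ^ m1) 1 \<noteq> 0" by (simp add: poly_power)
      then have o0: "order 1 ([:1,1::real:] ^ m1) = 0" using order_root by blast
      have "m2 \<le> order 1 q" using vanish_order[OF v2] qn by blast
      also have "order 1 q = order 1 q1" using order_mult[of "[:1,1::real:] ^ m1" q1 1] qn q1 o0 by simp
      finally have "[:- 1, 1:] ^ m2 dvd q1" using order_divides q1n by blast
      then obtain w where w: "q1 = [:-1,1:] ^ m2 * w" by (auto elim: dvdE)
      have wn: "w \<noteq> 0" using q1n w by auto
      define w' where "w' = smult ((-1) ^ m2) w"
      have qt: "poly q t = (1 - t) ^ m2 * (1 + t) ^ m1 * poly w' t" for t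
      proof -
        have "(-1) ^ m2 * (1 - t) ^ m2 = (t - 1) ^ m2"
          by (simp add: power_mult_distrib[symmetric])
        then show ?thesis unfolding q1 w w'_def
          by (simp add: poly_power algebra_simps)
      qed
      have "degree q = m1 + (m2 + degree w)" unfolding q1 w using wn
        by (simp add: degree_mult_eq degree_power_eq)
      then have dw: "degree w' \<le> nat (r - k)" using dq m12 unfolding w'_def by simp
      have mk: "max 1 k = k" using False k0 by simp
      have pf: "poly_fun_le (r - max 1 k) (poly w')"
        using mk dw kr by (intro poly_fun_le_poly) auto
      have "\<forall>\<phi>. poly_fun_le (r - max 1 k) \<phi> \<longrightarrow> I (\<lambda>t. (1 - t) ^ nat (k div 2) * (1 + t) ^ nat \<bar>(k - 1) div 2\<bar> * poly w' t * \<phi> t) = 0"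
      proof (intro allI impI)
        fix \<phi> assume "poly_fun_le (r - max 1 k) \<phi>"
        then obtain P where P: "\<phi> = poly P" "degree P \<le> nat (r - max 1 k)" using poly_fun_le_ex by blast
        have e1: "nat \<bar>(k - 1) div 2\<bar> = m1" unfolding m1_def using False k0 by simp
        have "I (\<lambda>t. (1 - t) ^ nat (k div 2) * (1 + t) ^ nat \<bar>(k - 1) div 2\<bar> * poly w' t * \<phi> t) = Ip ([:1,1:] ^ 0 * P * q)"
          unfolding Ip_def P(1) e1 m2_def[symmetric] by (rule arg_cong[where f=I]) (simp add: fun_eq_iff qt mult_ac)
        also have "\<dots> = 0"
        proof (rule span_lemma[OF Ipadd Ipsc _ P(2)], intro allI impI)
          fix i assume "i \<le> nat (r - max 1 k)"
          then have "int i \<in> J3" using False mk kr unfolding J3_def by (auto simp: le_nat_iff)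
          from van3[OF this] show "Ip ([:1, 1:] ^ (0 + i) * q) = 0" by simp
        qed
        finally show "I (\<lambda>t. (1 - t) ^ nat (k div 2) * (1 + t) ^ nat \<bar>(k - 1) div 2\<bar> * poly w' t * \<phi> t) = 0" .
      qed
      with A pf have "\<forall>t\<in>{-1..1}. poly w' t = 0" unfolding A1_def by blast
      then have "w' = 0" by (rule poly_zero_on_Icc)
      then show False using wn unfolding w'_def by simp
    qed
  qed
  obtain K where K: "K > 0" and Kb: "\<forall>p. (\<forall>i\<ge>nat r. coeff p i = 0) \<longrightarrow> (\<forall>s\<in>{-1..1}. \<bar>poly p s\<bar> \<le> K * (\<Sum>x\<in>J. \<bar>F p x\<bar>))"
    using left_inv_bound[where F=F and J=J and n="nat r", OF finJ Fadd Fsc inj] by blast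
  have sumJ: "(\<Sum>x\<in>J. \<bar>F q x\<bar>) =
     (\<Sum>i\<in>{1..(k - 1) div 2}. \<bar>poly ((pderiv ^^ (nat i - 1)) q) (-1)\<bar>)
    + (\<Sum>i\<in>{1..k div 2}. \<bar>poly ((pderiv ^^ (nat i - 1)) q) 1\<bar>)
    + (\<Sum>i\<in>{(if k = 0 then 1 else 0)..r - k}. \<bar>I (\<lambda>s. (1 + s) ^ nat i * poly q s)\<bar>)" for q
  proof -
    have fin: "finite J1" "finite J2" "finite J3" unfolding J1_def J2_def J3_def by auto
    have "(\<Sum>x\<in>J. \<bar>F q x\<bar>) = (\<Sum>x\<in>Pair 0 ` J1. \<bar>F q x\<bar>) + (\<Sum>x\<in>Pair 1 ` J2. \<bar>F q x\<bar>) + (\<Sum>x\<in>Pair 2 ` J3. \<bar>F q x\<bar>)"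
      unfolding J_def using fin by (subst sum.union_disjoint; auto)+
    also have "\<dots> = (\<Sum>i\<in>J1. \<bar>F q (0, i)\<bar>) + (\<Sum>i\<in>J2. \<bar>F q (1, i)\<bar>) + (\<Sum>i\<in>J3. \<bar>F q (2, i)\<bar>)"
      by (simp add: sum.reindex inj_on_def)
    finally show ?thesis unfolding F_def J1_def J2_def J3_def by (simp add: Iform)
  qed
  show ?thesis using K Kb unfolding sumJ by blast
qed




definition vecpoly :: "('a::euclidean_space \<Rightarrow> real poly) \<Rightarrow> real \<Rightarrow> 'a" where
  "vecpoly Q t = (\<Sum>j\<in>Basis. poly (Q j) t *\<^sub>R j)"

lemma vecpoly_deriv:
  "(vecpoly Q has_vector_derivative vecpoly (\<lambda>j. pderiv (Q j)) t) (at t within S)"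
proof -
  have "((\<lambda>t. poly (Q j) t *\<^sub>R j) has_vector_derivative (poly (pderiv (Q j)) t *\<^sub>R j)) (at t within S)" for j
    using has_vector_derivative_scaleR[OF has_field_derivative_at_within[OF poly_DERIV] has_vector_derivative_const[of j]]
    by simp
  then show ?thesis unfolding vecpoly_def[abs_def]
    by (rule has_vector_derivative_sum)
qed

lemma vdiff_vecpoly: "vdiff (vecpoly Q) = vecpoly (\<lambda>j. pderiv (Q j))"
  unfolding vdiff_def fun_eq_iff by (intro allI vector_derivative_at vecpoly_deriv)

lemma vdiffn_vecpoly: "vdiffn i (vecpoly Q) = vecpoly (\<lambda>j. (pderiv ^^ i) (Q j))"
proof (induction i)
  case 0 then show ?case by (simp add: vdiffn_def)
next
  case (Suc i)
  have "vdiffn (Suc i) (vecpoly Q) = vdiff (vdiffn i (vecpoly Q))" by (simp add: vdiffn_def)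
  then show ?case using Suc by (simp add: vdiff_vecpoly)
qed

lemma vecpoly_inner: "j \<in> Basis \<Longrightarrow> vecpoly Q t \<bullet> j = poly (Q j) t"
  unfolding vecpoly_def by (simp add: inner_sum_left inner_Basis if_distrib cong: if_cong)

lemma norm_vecpoly_le: "norm (vecpoly Q t) \<le> (\<Sum>j\<in>Basis. \<bar>poly (Q j) t\<bar>)"
  unfolding vecpoly_def by (rule order.trans[OF norm_sum]) simp

lemma abs_le_norm_vecpoly: "j \<in> Basis \<Longrightarrow> \<bar>poly (Q j) t\<bar> \<le> norm (vecpoly Q t)"
  using Basis_le_norm[of j "vecpoly Q t"] vecpoly_inner[of j Q t] by simp

lemma continuous_on_vecpoly: "continuous_on S (vecpoly Q)"
  unfolding continuous_on_eq_continuous_within by (intro ballI has_vector_derivative_continuous[OF vecpoly_deriv])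

lemma loc_int_inner: "j \<in> Basis \<Longrightarrow> loc_int I a b \<psi> \<bullet> j = (b - a) / 2 * I (\<lambda>s. \<psi> (Tmap a b s) \<bullet> j)"
  unfolding loc_int_def by (simp add: inner_sum_left inner_Basis if_distrib cong: if_cong)

lemma coeff_vanish_pcompose:
  fixes p L :: "real poly"
  assumes "\<forall>i\<ge>n. coeff p i = 0" and "degree L \<le> 1"
  shows "\<forall>i\<ge>n. coeff (pcompose p L) i = 0"
proof (cases "p = 0")
  case True then show ?thesis by simp
next
  case False
  then have "degree p < n" using assms(1) by (metis leading_coeff_0_iff not_le)
  moreover have "degree (pcompose p L) \<le> degree p"
    using degree_pcompose_le[of p L] assms(2) by (metis mult.right_neutral mult_le_mono2 order_trans)
  ultimately show ?thesis by (auto intro: coeff_eq_0)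
qed

lemma coeff_vanish_pderiv:
  fixes p :: "real poly"
  assumes "degree p \<le> n"
  shows "\<forall>i\<ge>n. coeff (pderiv p) i = 0"
  using assms by (auto simp: coeff_pderiv coeff_eq_0)

lemma pderiv_funpow_pcompose:
  fixes p :: "real poly"
  shows "(pderiv ^^ m) (pcompose p [:\<alpha>, \<beta>:]) = smult (\<beta> ^ m) (pcompose ((pderiv ^^ m) p) [:\<alpha>, \<beta>:])"
proof (induction m arbitrary: p)
  case 0 then show ?case by simp
next
  case (Suc m)
  have "(pderiv ^^ Suc m) (pcompose p [:\<alpha>, \<beta>:]) = (pderiv ^^ m) (pderiv (pcompose p [:\<alpha>, \<beta>:]))"
    by (simp add: funpow_Suc_right del: funpow.simps)
  also have "pderiv (pcompose p [:\<alpha>, \<beta>:]) = smult \<beta> (pcompose (pderiv p) [:\<alpha>, \<beta>:])"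
    by (simp add: pderiv_pcompose pderiv_pCons)
  also have "(pderiv ^^ m) (smult \<beta> (pcompose (pderiv p) [:\<alpha>, \<beta>:])) = smult (\<beta> ^ Suc m) (pcompose ((pderiv ^^ Suc m) p) [:\<alpha>, \<beta>:])"
    by (simp add: pderiv_funpow_smult Suc funpow_Suc_right del: funpow.simps)
  finally show ?case .
qed

theorem mainTheorem4:
  fixes I :: "(real \<Rightarrow> real) \<Rightarrow> real" and r k :: int
  assumes "0 \<le> k" and "k \<le> r"
    and I_add: "\<And>f g. is_poly_fun f \<Longrightarrow> is_poly_fun g \<Longrightarrow> I (\<lambda>t. f t + g t) = I f + I g"
    and I_scale: "\<And>f c. is_poly_fun f \<Longrightarrow> I (\<lambda>t. c * f t) = c * I f"
    and "A1 I r k"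
  shows "\<exists>\<kappa>>0. \<forall>(a::real) b (\<phi>::real \<Rightarrow> 'a::euclidean_space).
     a < b \<longrightarrow> b - a \<le> 1 \<longrightarrow> vpoly_fun_le r \<phi> \<longrightarrow>
       integral {a..b} (\<lambda>t. norm (vdiff \<phi> t))
         \<le> (b - a) * Sup ((\<lambda>t. norm (vdiff \<phi> t)) ` {a<..b})
     \<and> (b - a) * Sup ((\<lambda>t. norm (vdiff \<phi> t)) ` {a<..b})
         \<le> \<kappa> * ((\<Sum>i\<in>{1..(k - 1) div 2}. ((b - a) / 2) ^ nat i * norm (vdiffn (nat i) \<phi> a))
                + (\<Sum>i\<in>{1..k div 2}. ((b - a) / 2) ^ nat i * norm (vdiffn (nat i) \<phi> b))
                + (\<Sum>i\<in>{(if k = 0 then 1 else 0)..r - k}.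
                     norm (loc_int I a b (\<lambda>t. (1 + Tinv a b t) ^ nat i *\<^sub>R vdiff \<phi> t))))
     \<and> Sup ((\<lambda>t. norm (\<phi> t)) ` {a<..b})
         \<le> min (norm (\<phi> a)) (norm (\<phi> b)) + integral {a..b} (\<lambda>t. norm (vdiff \<phi> t))"
proof -
  obtain C where C: "C > 0" and Cb: "\<forall>q::real poly. (\<forall>i\<ge>nat r. coeff q i = 0) \<longrightarrow> (\<forall>s\<in>{-1..1}. \<bar>poly q s\<bar> \<le> C *
     ((\<Sum>i\<in>{1..(k - 1) div 2}. \<bar>poly ((pderiv ^^ (nat i - 1)) q) (-1)\<bar>)
    + (\<Sum>i\<in>{1..k div 2}. \<bar>poly ((pderiv ^^ (nat i - 1)) q) 1\<bar>)
    + (\<Sum>i\<in>{(if k = 0 then 1 else 0)..r - k}. \<bar>I (\<lambda>s. (1 + s) ^ nat i * poly q s)\<bar>)))"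
    using core[OF assms] by blast
  define \<kappa> where "\<kappa> = 2 * C * real DIM('a)"
  have \<kappa>: "\<kappa> > 0" unfolding \<kappa>_def using C by simp
  have r0: "0 \<le> r" using assms(1,2) by simp
  show ?thesis
  proof (rule exI[of _ \<kappa>], rule conjI[OF \<kappa>], intro allI impI)
    fix a b :: real and \<phi> :: "real \<Rightarrow> 'a"
    assume ab: "a < b" and ab1: "b - a \<le> 1" and vp: "vpoly_fun_le r \<phi>"
    obtain c where c: "\<And>t. \<phi> t = (\<Sum>i<nat (r + 1). t ^ i *\<^sub>R c i)" using vp unfolding vpoly_fun_le_def by blast
    define Q where "Q j = (\<Sum>i<nat (r + 1). monom (c i \<bullet> j) i)" for j :: 'a
    have phiQ: "\<phi> = vecpoly Q"
    proof
      fix t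
      have "vecpoly Q t = (\<Sum>j\<in>Basis. (\<phi> t \<bullet> j) *\<^sub>R j)"
        unfolding vecpoly_def Q_def c by (simp add: poly_sum poly_monom inner_sum_left mult.commute)
      then show "\<phi> t = vecpoly Q t" by (simp add: euclidean_representation)
    qed
    have nr: "nat (r + 1) = Suc (nat r)" using r0 by simp
    have degQ: "degree (Q j) \<le> nat r" for j
      unfolding Q_def by (rule degree_sum_le) (auto intro: order.trans[OF degree_monom_le] simp: nr)
    have dphi: "vdiff \<phi> = vecpoly (\<lambda>j. pderiv (Q j))" unfolding phiQ by (rule vdiff_vecpoly)
    have dnphi: "vdiffn i \<phi> = vecpoly (\<lambda>j. (pderiv ^^ i) (Q j))" for i unfolding phiQ by (rule vdiffn_vecpoly)
    define f where "f t = norm (vdiff \<phi> t)" for t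
    have fc: "continuous_on S f" for S
      unfolding f_def dphi by (intro continuous_on_norm continuous_on_vecpoly)
    have fint: "f integrable_on {u..v}" for u v
      by (rule integrable_continuous_interval[OF fc])
    have f0: "0 \<le> f t" for t unfolding f_def by simp
    have fle: "integral {u..v} f \<le> integral {a..b} f" if "a \<le> u" "v \<le> b" for u v
      by (rule integral_subset_le) (use that fint f0 in auto)
    have bdd: "bdd_above (f ` {a<..b})"
    proof -
      have "compact (f ` {a..b})" by (rule compact_continuous_image[OF fc compact_Icc])
      then have "bdd_above (f ` {a..b})" by (intro bounded_imp_bdd_above compact_imp_bounded)
      then show ?thesis by (rule bdd_above_mono) auto
    qed
    define M where "M = Sup (f ` {a<..b})"
    have fM: "f t \<le> M" if "t \<in> {a..b}" for t
    proof -
      have "f t \<le> M" if "t \<in> {a<..b}" for t unfolding M_def using bdd that by (rule cSUP_upper2) simp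
      moreover have "t \<in> closure {a<..b}" using that ab by simp
      ultimately show ?thesis using continuous_le_on_closure[OF fc, of t "{a<..b}" M] by blast
    qed
    have "integral {a..b} f \<le> integral {a..b} (\<lambda>_. M)"
      by (rule integral_le[OF fint]) (auto intro: fM)
    also have "\<dots> = (b - a) * M" using ab by simp
    finally have claim1: "integral {a..b} (\<lambda>t. norm (vdiff \<phi> t)) \<le> (b - a) * Sup ((\<lambda>t. norm (vdiff \<phi> t)) ` {a<..b})"
      unfolding M_def f_def .
    have claim3: "Sup ((\<lambda>t. norm (\<phi> t)) ` {a<..b}) \<le> min (norm (\<phi> a)) (norm (\<phi> b)) + integral {a..b} (\<lambda>t. norm (vdiff \<phi> t))"
    proof -
      have ftc: "norm (\<phi> v - \<phi> u) \<le> integral {a..b} f" if "a \<le> u" "u \<le> v" "v \<le> b" for u v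
      proof -
        have hi: "(vdiff \<phi> has_integral (\<phi> v - \<phi> u)) {u..v}"
          unfolding phiQ vdiff_vecpoly by (rule fundamental_theorem_of_calculus[OF that(2)]) (rule vecpoly_deriv)
        have "norm (\<phi> v - \<phi> u) = norm (integral {u..v} (vdiff \<phi>))" using hi by (simp add: integral_unique)
        also have "\<dots> \<le> integral {u..v} f"
          by (rule integral_norm_bound_integral) (use hi fint in \<open>auto simp: f_def\<close>)
        also have "\<dots> \<le> integral {a..b} f" by (rule fle) (use that in auto)
        finally show ?thesis .
      qed
      have "norm (\<phi> t) \<le> min (norm (\<phi> a)) (norm (\<phi> b)) + integral {a..b} f" if "t \<in> {a<..b}" for t
      proof -
        have "norm (\<phi> t) \<le> norm (\<phi> a) + norm (\<phi> t - \<phi> a)" by (rule norm_triangle_sub)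
        also have "\<dots> \<le> norm (\<phi> a) + integral {a..b} f" using ftc[of a t] that by auto
        finally have 1: "norm (\<phi> t) \<le> norm (\<phi> a) + integral {a..b} f" .
        have "norm (\<phi> t) \<le> norm (\<phi> b) + norm (\<phi> b - \<phi> t)" using norm_triangle_sub[of "\<phi> t" "\<phi> b"] by (simp add: norm_minus_commute)
        also have "\<dots> \<le> norm (\<phi> b) + integral {a..b} f" using ftc[of t b] that by auto
        finally have 2: "norm (\<phi> t) \<le> norm (\<phi> b) + integral {a..b} f" .
        show ?thesis using 1 2 by linarith
      qed
      then show ?thesis unfolding f_def[symmetric] using ab by (intro cSUP_least) auto
    qed
    have claim2: "(b - a) * Sup ((\<lambda>t. norm (vdiff \<phi> t)) ` {a<..b})
         \<le> \<kappa> * ((\<Sum>i\<in>{1..(k - 1) div 2}. ((b - a) / 2) ^ nat i * norm (vdiffn (nat i) \<phi> a))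
                + (\<Sum>i\<in>{1..k div 2}. ((b - a) / 2) ^ nat i * norm (vdiffn (nat i) \<phi> b))
                + (\<Sum>i\<in>{(if k = 0 then 1 else 0)..r - k}.
                     norm (loc_int I a b (\<lambda>t. (1 + Tinv a b t) ^ nat i *\<^sub>R vdiff \<phi> t))))"
    proof -
      define h where "h = (b - a) / 2"
      have h: "h > 0" unfolding h_def using ab by simp
      define L where "L = [:(a + b) / 2, h:]"
      have polyL: "poly L s = Tmap a b s" for s unfolding L_def Tmap_def h_def by simp
      have degL: "degree L \<le> 1" unfolding L_def by simp
      define q where "q j = pcompose (pderiv (Q j)) L" for j
      have polyq: "poly (q j) s = poly (pderiv (Q j)) (Tmap a b s)" for j s
        unfolding q_def by (simp add: poly_pcompose polyL)
      have qc: "\<forall>i\<ge>nat r. coeff (q j) i = 0" for j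
        unfolding q_def by (rule coeff_vanish_pcompose[OF coeff_vanish_pderiv[OF degQ] degL])
      have dq: "poly ((pderiv ^^ m) (q j)) s = h ^ m * poly ((pderiv ^^ Suc m) (Q j)) (Tmap a b s)" for m j s
        unfolding q_def L_def pderiv_funpow_pcompose
        by (simp add: poly_pcompose funpow_Suc_right Tmap_def h_def mult.commute del: funpow.simps)
      have TiTm: "Tinv a b (Tmap a b s) = s" for s unfolding Tinv_def Tmap_def using ab by (simp add: field_simps)
      have TmTi: "Tmap a b (Tinv a b t) = t" for t unfolding Tinv_def Tmap_def using ab by (simp add: field_simps)
      have Tm1: "Tmap a b (-1) = a" "Tmap a b 1 = b" unfolding Tmap_def by (simp_all add: field_simps)
      define S1 where "S1 = (\<Sum>i\<in>{1..(k - 1) div 2}. ((b - a) / 2) ^ nat i * norm (vdiffn (nat i) \<phi> a))"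
      define S2 where "S2 = (\<Sum>i\<in>{1..k div 2}. ((b - a) / 2) ^ nat i * norm (vdiffn (nat i) \<phi> b))"
      define S3 where "S3 = (\<Sum>i\<in>{(if k = 0 then 1 else 0)..r - k}. norm (loc_int I a b (\<lambda>t. (1 + Tinv a b t) ^ nat i *\<^sub>R vdiff \<phi> t)))"
      define A where "A j = ((\<Sum>i\<in>{1..(k - 1) div 2}. \<bar>poly ((pderiv ^^ (nat i - 1)) (q j)) (-1)\<bar>)
    + (\<Sum>i\<in>{1..k div 2}. \<bar>poly ((pderiv ^^ (nat i - 1)) (q j)) 1\<bar>)
    + (\<Sum>i\<in>{(if k = 0 then 1 else 0)..r - k}. \<bar>I (\<lambda>s. (1 + s) ^ nat i * poly (q j) s)\<bar>))" for j
      have endpt: "h * \<bar>poly ((pderiv ^^ (nat i - 1)) (q j)) s\<bar> \<le> h ^ nat i * norm (vdiffn (nat i) \<phi> (Tmap a b s))"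
        if "1 \<le> i" "j \<in> Basis" for i j s
      proof -
        define m where "m = nat i - 1"
        have m: "nat i = Suc m" unfolding m_def using that(1) by simp
        have "h * \<bar>poly ((pderiv ^^ (nat i - 1)) (q j)) s\<bar> = h ^ nat i * \<bar>poly ((pderiv ^^ nat i) (Q j)) (Tmap a b s)\<bar>"
          unfolding m_def[symmetric] m dq using h by (simp add: abs_mult power_abs abs_of_pos[OF h])
        also have "\<dots> \<le> h ^ nat i * norm (vdiffn (nat i) \<phi> (Tmap a b s))"
          unfolding dnphi using h that(2) by (intro mult_left_mono abs_le_norm_vecpoly) auto
        finally show ?thesis .
      qed
      have hA: "h * A j \<le> S1 + S2 + S3" if j: "j \<in> Basis" for j
      proof -
        have "h * (\<Sum>i\<in>{1..(k - 1) div 2}. \<bar>poly ((pderiv ^^ (nat i - 1)) (q j)) (-1)\<bar>) \<le> S1"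
          unfolding S1_def sum_distrib_left h_def[symmetric]
          by (rule sum_mono) (use endpt[of _ j "-1"] j Tm1 in auto)
        moreover have "h * (\<Sum>i\<in>{1..k div 2}. \<bar>poly ((pderiv ^^ (nat i - 1)) (q j)) 1\<bar>) \<le> S2"
          unfolding S2_def sum_distrib_left h_def[symmetric]
          by (rule sum_mono) (use endpt[of _ j "1"] j Tm1 in auto)
        moreover have "h * (\<Sum>i\<in>{(if k = 0 then 1 else 0)..r - k}. \<bar>I (\<lambda>s. (1 + s) ^ nat i * poly (q j) s)\<bar>) \<le> S3"
          unfolding S3_def sum_distrib_left
        proof (rule sum_mono)
          fix i :: int
          have "(\<lambda>s. ((1 + Tinv a b (Tmap a b s)) ^ nat i *\<^sub>R vdiff \<phi> (Tmap a b s)) \<bullet> j) = (\<lambda>s. (1 + s) ^ nat i * poly (q j) s)"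
            using j by (simp add: fun_eq_iff TiTm polyq dphi vecpoly_inner)
          then have "h * \<bar>I (\<lambda>s. (1 + s) ^ nat i * poly (q j) s)\<bar> = \<bar>loc_int I a b (\<lambda>t. (1 + Tinv a b t) ^ nat i *\<^sub>R vdiff \<phi> t) \<bullet> j\<bar>"
            using j ab by (simp add: loc_int_inner h_def abs_mult)
          also have "\<dots> \<le> norm (loc_int I a b (\<lambda>t. (1 + Tinv a b t) ^ nat i *\<^sub>R vdiff \<phi> t))" using j by (rule Basis_le_norm)
          finally show "h * \<bar>I (\<lambda>s. (1 + s) ^ nat i * poly (q j) s)\<bar> \<le> norm (loc_int I a b (\<lambda>t. (1 + Tinv a b t) ^ nat i *\<^sub>R vdiff \<phi> t))" .
        qed
        ultimately show ?thesis unfolding A_def by (simp add: distrib_left)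
      qed
      have pt: "(b - a) * norm (vdiff \<phi> t) \<le> \<kappa> * (S1 + S2 + S3)" if t: "t \<in> {a<..b}" for t
      proof -
        define s where "s = Tinv a b t"
        have s: "s \<in> {-1..1}" using t ab unfolding s_def Tinv_def by (auto simp: field_simps)
        have ts: "Tmap a b s = t" unfolding s_def by (rule TmTi)
        have "norm (vdiff \<phi> t) \<le> (\<Sum>j\<in>Basis. \<bar>poly (pderiv (Q j)) t\<bar>)" unfolding dphi by (rule norm_vecpoly_le)
        also have "\<dots> = (\<Sum>j\<in>Basis. \<bar>poly (q j) s\<bar>)" by (simp add: polyq ts)
        also have "\<dots> \<le> (\<Sum>j\<in>Basis. C * A j)"
        proof (rule sum_mono)
          fix j :: 'a
          show "\<bar>poly (q j) s\<bar> \<le> C * A j" unfolding A_def using Cb qc[of j] s by blast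
        qed
        also have "\<dots> \<le> (\<Sum>j\<in>(Basis::'a set). C * ((S1 + S2 + S3) / h))"
        proof (rule sum_mono)
          fix j :: 'a assume j: "j \<in> Basis"
          have "A j \<le> (S1 + S2 + S3) / h" using hA[OF j] h by (simp add: pos_le_divide_eq mult.commute)
          then show "C * A j \<le> C * ((S1 + S2 + S3) / h)" using C by (intro mult_left_mono) auto
        qed
        also have "\<dots> = real DIM('a) * C * ((S1 + S2 + S3) / h)" by simp
        finally have "norm (vdiff \<phi> t) \<le> real DIM('a) * C * ((S1 + S2 + S3) / h)" .
        then have "(b - a) * norm (vdiff \<phi> t) \<le> (b - a) * (real DIM('a) * C * ((S1 + S2 + S3) / h))"
          using ab by (intro mult_left_mono) auto
        also have "\<dots> = \<kappa> * (S1 + S2 + S3)" unfolding \<kappa>_def h_def using ab by (simp add: field_simps)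
        finally show ?thesis .
      qed
      have "Sup ((\<lambda>t. norm (vdiff \<phi> t)) ` {a<..b}) \<le> \<kappa> * (S1 + S2 + S3) / (b - a)"
        using ab pt by (intro cSUP_least) (auto simp: pos_le_divide_eq mult.commute)
      then have "(b - a) * Sup ((\<lambda>t. norm (vdiff \<phi> t)) ` {a<..b}) \<le> (b - a) * (\<kappa> * (S1 + S2 + S3) / (b - a))"
        using ab by (intro mult_left_mono) auto
      also have "\<dots> = \<kappa> * (S1 + S2 + S3)" using ab by simp
      finally show ?thesis unfolding S1_def S2_def S3_def .
    qed
    show "integral {a..b} (\<lambda>t. norm (vdiff \<phi> t)) \<le> (b - a) * Sup ((\<lambda>t. norm (vdiff \<phi> t)) ` {a<..b}) \<and> (b - a) * Sup ((\<lambda>t. norm (vdiff \<phi> t)) ` {a<..b})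
         \<le> \<kappa> * ((\<Sum>i\<in>{1..(k - 1) div 2}. ((b - a) / 2) ^ nat i * norm (vdiffn (nat i) \<phi> a))
                + (\<Sum>i\<in>{1..k div 2}. ((b - a) / 2) ^ nat i * norm (vdiffn (nat i) \<phi> b))
                + (\<Sum>i\<in>{(if k = 0 then 1 else 0)..r - k}.
                     norm (loc_int I a b (\<lambda>t. (1 + Tinv a b t) ^ nat i *\<^sub>R vdiff \<phi> t)))) \<and> Sup ((\<lambda>t. norm (\<phi> t)) ` {a<..b}) \<le> min (norm (\<phi> a)) (norm (\<phi> b)) + integral {a..b} (\<lambda>t. norm (vdiff \<phi> t))"
      by (intro conjI claim1 claim2 claim3)
  qed
qed

end
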